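(* Let $(E,\tau)$ be a violator space. Then $(E,\tau)$ is uniquely generated (in the sense that every $X\subseteq E$ has exactly one inclusion-minimal subset $B\subseteq X$ with $\tau(B)=\tau(X)$) if and only if $\tau(X)=\tau(ex(X))$ for every $X\subseteq E$.
   Context: $E$ is a finite set and $\tau:2^E\to 2^E$. $(E,\tau)$ is a violator space if (C1) $Y\subseteq\tau(Y)$ for all $Y\subseteq E$, and (C22) for all $F,G\subseteq E$, $F\subseteq G\subseteq\tau(F)$ implies $\tau(G)=\tau(F)$. An element $x\in X$ is an extreme point of $X$ if $x\notin\tau(X-\{x\})$; $ex(X)$ is the set of extreme points of $X$. *)

theory Defs
  imports Main
begin

(* A violator space (E, tau): E finite, tau : 2^E -> 2^E satisfying (C1) and (C22). *)
definition violator_space :: "'a set \<Rightarrow> ('a set \<Rightarrow> 'a set) \<Rightarrow> bool" where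
  "violator_space E tau \<longleftrightarrow> finite E
     \<and> (\<forall>Y. Y \<subseteq> E \<longrightarrow> tau Y \<subseteq> E)
     \<and> (\<forall>Y. Y \<subseteq> E \<longrightarrow> Y \<subseteq> tau Y)
     \<and> (\<forall>F G. F \<subseteq> E \<longrightarrow> G \<subseteq> E \<longrightarrow> F \<subseteq> G \<longrightarrow> G \<subseteq> tau F \<longrightarrow> tau G = tau F)"

definition ex :: "('a set \<Rightarrow> 'a set) \<Rightarrow> 'a set \<Rightarrow> 'a set" where
  "ex tau X = {x \<in> X. x \<notin> tau (X - {x})}"

definition is_basis :: "('a set \<Rightarrow> 'a set) \<Rightarrow> 'a set \<Rightarrow> 'a set \<Rightarrow> bool" where
  "is_basis tau X B \<longleftrightarrow> B \<subseteq> X \<and> tau B = tau X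
     \<and> (\<forall>B'. B' \<subset> B \<longrightarrow> tau B' \<noteq> tau B)"

definition uniquely_generated :: "'a set \<Rightarrow> ('a set \<Rightarrow> 'a set) \<Rightarrow> bool" where
  "uniquely_generated E tau \<longleftrightarrow> (\<forall>X. X \<subseteq> E \<longrightarrow> (\<exists>!B. is_basis tau X B))"

end

theory Submission
  imports Defs
begin

lemma vs_C1: "violator_space E tau \<Longrightarrow> Y \<subseteq> E \<Longrightarrow> Y \<subseteq> tau Y"
  unfolding violator_space_def by blast

lemma vs_C22: "violator_space E tau \<Longrightarrow> G \<subseteq> E \<Longrightarrow> F \<subseteq> G \<Longrightarrow> G \<subseteq> tau F \<Longrightarrow> tau G = tau F"
  unfolding violator_space_def by (meson order_trans)

lemma ex_sub:
  assumes V: "violator_space E tau" and X: "X \<subseteq> E" and B: "B \<subseteq> X" and T: "tau B = tau X"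
  shows "ex tau X \<subseteq> B"
proof
  fix x assume xe: "x \<in> ex tau X"
  show "x \<in> B"
  proof (rule ccontr)
    assume "x \<notin> B"
    hence s: "B \<subseteq> X - {x}" using B by auto
    have "X \<subseteq> tau X" using vs_C1[OF V X] .
    hence "X - {x} \<subseteq> tau B" using T by auto
    hence "tau (X - {x}) = tau B" using vs_C22[OF V _ s] X by blast
    hence "x \<in> tau (X - {x})" using T \<open>X \<subseteq> tau X\<close> xe unfolding ex_def by auto
    thus False using xe unfolding ex_def by auto
  qed
qed

theorem mainTheorem14:
  assumes "violator_space E tau"
  shows "uniquely_generated E tau \<longleftrightarrow> (\<forall>X. X \<subseteq> E \<longrightarrow> tau X = tau (ex tau X))"
proof
  assume U: "uniquely_generated E tau"
  show "\<forall>X. X \<subseteq> E \<longrightarrow> tau X = tau (ex tau X)"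
  proof (intro allI impI)
    fix X assume X: "X \<subseteq> E"
    have "\<exists>!B. is_basis tau X B" using U X unfolding uniquely_generated_def by blast
    then obtain B where Bb: "is_basis tau X B" and Bu: "\<And>C. is_basis tau X C \<Longrightarrow> C = B"
      by (elim ex1E) blast
    have BX: "B \<subseteq> X" "tau B = tau X" using Bb unfolding is_basis_def by auto
    have "B \<subseteq> ex tau X"
    proof
      fix x assume xB: "x \<in> B"
      show "x \<in> ex tau X"
      proof (rule ccontr)
        assume "x \<notin> ex tau X"
        hence xt: "x \<in> tau (X - {x})" using xB BX unfolding ex_def by auto
        have XE: "X - {x} \<subseteq> E" using X by auto
        have "X - {x} \<subseteq> tau (X - {x})" using vs_C1[OF assms XE] .
        hence "X \<subseteq> tau (X - {x})" using xt by auto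
        hence eq: "tau X = tau (X - {x})" using vs_C22[OF assms X, of "X - {x}"] by auto
        have "\<exists>!C. is_basis tau (X - {x}) C" using U XE unfolding uniquely_generated_def by blast
        then obtain C where Cb: "is_basis tau (X - {x}) C" by (elim ex1E) blast
        hence "is_basis tau X C" using eq unfolding is_basis_def by (metis Diff_subset order_trans)
        hence "C = B" by (rule Bu)
        thus False using Cb xB unfolding is_basis_def by auto
      qed
    qed
    moreover have "ex tau X \<subseteq> B" using ex_sub[OF assms X BX] .
    ultimately show "tau X = tau (ex tau X)" using BX by auto
  qed
next
  assume H: "\<forall>X. X \<subseteq> E \<longrightarrow> tau X = tau (ex tau X)"
  show "uniquely_generated E tau"
    unfolding uniquely_generated_def
  proof (intro allI impI)
    fix X assume X: "X \<subseteq> E"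
    have exX: "ex tau X \<subseteq> X" unfolding ex_def by auto
    have te: "tau (ex tau X) = tau X" using H X by metis
    have b: "is_basis tau X (ex tau X)"
      unfolding is_basis_def
    proof (intro conjI allI impI exX te)
      fix B' assume "B' \<subset> ex tau X"
      show "tau B' \<noteq> tau (ex tau X)"
      proof
        assume "tau B' = tau (ex tau X)"
        hence "ex tau X \<subseteq> B'" using ex_sub[OF assms X, of B'] \<open>B' \<subset> ex tau X\<close> exX te by auto
        thus False using \<open>B' \<subset> ex tau X\<close> by auto
      qed
    qed
    show "\<exists>!B. is_basis tau X B"
    proof (rule ex1I[where P="is_basis tau X", OF b])
      fix B assume Bb: "is_basis tau X B"
      hence "ex tau X \<subseteq> B" using ex_sub[OF assms X] unfolding is_basis_def by auto
      moreover have "\<not> ex tau X \<subset> B" using Bb te unfolding is_basis_def by metis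
      ultimately show "B = ex tau X" by auto
    qed
  qed
qed

end
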